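(* Fix integers $d\ge 2$, $k\ge 1$, a configuration $\omega\in\{0,1\}^{\mathbb{E}_{d,k}}$ and a set $A\subset[d]_\star$. Then the sets $\mathrm{prog}(e)$, $e\in\sigma(A)$, are pairwise disjoint. If moreover there exists $w\in[d]_\star$ such that $A\subset\{w\cdot v: v\in\bigcup_{n=0}^{k}[d]^n\}$, then: (i) for every long edge $e=\langle u,u\cdot r\rangle$ (with $r\in[d]^k$) such that $u\in\pi(A)$ and $u\cdot r\notin\pi(A)$, there exists a unique $e'\in\mathrm{trace}(e)\cap\sigma(A)$; (ii) $\Pi(A)$ is the disjoint union of $\pi(A)$ and the sets $\Pi(A)\cap\mathrm{prog}(e)$ for $e\in\sigma(A)$.
   Context: $[d]=\{1,\dots,d\}$, $[d]_\star=\bigcup_{n\ge0}[d]^n$ (finite sequences, $[d]^0=\{o\}$), with concatenation $u\cdot v$. The oriented graph $\mathbb{T}_{d,k}$ has vertex set $[d]_\star$ and edge set $\mathbb{E}_{d,k}=\mathbb{E}^{s}_{d,k}\cup\mathbb{E}^{\ell}_{d,k}$, where short edges are $\mathbb{E}^s_{d,k}=\{\langle u,u\cdot a\rangle:u\in[d]_\star,a\in[d]\}$ and long edges are $\mathbb{E}^\ell_{d,k}=\{\langle u,u\cdot r\rangle:u\in[d]_\star,r\in[d]^k\}$. An edge is open if $\omega$ equals 1 on it. The progeny of a vertex $u$ is $\mathrm{prog}(u)=\{u\cdot v:v\in[d]_\star\}$; for an edge $e=\langle u,v\rangle$, $\mathrm{prog}(e)=\mathrm{prog}(v)$. For a long edge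 $e=\langle u,u\cdot r\rangle$ with $r=(r_1,\dots,r_k)$, $\mathrm{trace}(e)$ is the set of $k$ short edges $\langle u,u\cdot r_1\rangle,\langle u\cdot r_1,u\cdot(r_1,r_2)\rangle,\dots,\langle u\cdot(r_1,\dots,r_{k-1}),u\cdot r\rangle$. $\Pi(A)$ is the set of vertices reachable from some vertex of $A$ by an oriented path of open edges (short or long; the empty path allowed, so $A\subseteq\Pi(A)$), and $\pi(A)$ is the set of vertices reachable from $A$ by an oriented path of open short edges only. A short edge $\langle u,v\rangle$ is a hub for $A$ if $\mathrm{prog}(v)\cap\pi(A)=\varnothing$ and $\mathrm{prog}(u)\cap\pi(A)\neq\varnothing$; $\sigma(A)$ denotes the set of hubs for $A$. *)

theory Defs
  imports Main
begin

text \<open>Vertices of T_{d,k}: finite words over [d] = {1..d}, represented as nat lists;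
  concatenation u . v is list append.\<close>
definition vert :: "nat \<Rightarrow> nat list set" where
  "vert d = {u. set u \<subseteq> {1..d}}"

definition short_edges :: "nat \<Rightarrow> (nat list \<times> nat list) set" where
  "short_edges d = {(u, u @ [a]) | u a. u \<in> vert d \<and> a \<in> {1..d}}"

definition long_edges :: "nat \<Rightarrow> nat \<Rightarrow> (nat list \<times> nat list) set" where
  "long_edges d k = {(u, u @ r) | u r. u \<in> vert d \<and> r \<in> vert d \<and> length r = k}"

definition edges :: "nat \<Rightarrow> nat \<Rightarrow> (nat list \<times> nat list) set" where
  "edges d k = short_edges d \<union> long_edges d k"

text \<open>A configuration omega in {0,1}^E is a boolean function on edges (True = 1 = open).\<close>

definition prog :: "nat \<Rightarrow> nat list \<Rightarrow> nat list set" where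
  "prog d u = {u @ v | v. v \<in> vert d}"

definition prog_edge :: "nat \<Rightarrow> nat list \<times> nat list \<Rightarrow> nat list set" where
  "prog_edge d e = prog d (snd e)"

definition trace :: "nat list \<Rightarrow> nat list \<Rightarrow> (nat list \<times> nat list) set" where
  "trace u r = {(u @ take i r, u @ take (Suc i) r) | i. i < length r}"

definition Pi_reach :: "nat \<Rightarrow> nat \<Rightarrow> (nat list \<times> nat list \<Rightarrow> bool) \<Rightarrow> nat list set \<Rightarrow> nat list set" where
  "Pi_reach d k \<omega> A = {v. \<exists>u\<in>A. (u, v) \<in> {e \<in> edges d k. \<omega> e}\<^sup>*}"

definition pi_reach :: "nat \<Rightarrow> (nat list \<times> nat list \<Rightarrow> bool) \<Rightarrow> nat list set \<Rightarrow> nat list set" where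
  "pi_reach d \<omega> A = {v. \<exists>u\<in>A. (u, v) \<in> {e \<in> short_edges d. \<omega> e}\<^sup>*}"

definition hubs :: "nat \<Rightarrow> (nat list \<times> nat list \<Rightarrow> bool) \<Rightarrow> nat list set \<Rightarrow> (nat list \<times> nat list) set" where
  "hubs d \<omega> A = {(u, v) | u v. (u, v) \<in> short_edges d \<and>
      prog d v \<inter> pi_reach d \<omega> A = {} \<and> prog d u \<inter> pi_reach d \<omega> A \<noteq> {}}"

end

theory Submission imports Defs "HOL-Library.Sublist" begin
lemma vert_append[simp]: "xs @ ys \<in> vert d \<longleftrightarrow> xs \<in> vert d \<and> ys \<in> vert d"
  by (auto simp: vert_def)

lemma prog_prefix: "x \<in> prog d u \<Longrightarrow> prefix u x"
  by (auto simp: prog_def)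

lemma progI: "v \<in> vert d \<Longrightarrow> u @ v \<in> prog d u"
  by (auto simp: prog_def)

lemma prog_iff: "x \<in> vert d \<Longrightarrow> x \<in> prog d u \<longleftrightarrow> prefix u x"
  by (auto simp: prog_def prefix_def)

lemma short_edgeI: "u \<in> vert d \<Longrightarrow> a \<in> {1..d} \<Longrightarrow> (u, u @ [a]) \<in> short_edges d"
  by (auto simp: short_edges_def)

lemma E_prefix: "(a, x) \<in> {e \<in> edges d k. \<omega> e}\<^sup>* \<Longrightarrow> \<exists>v\<in>vert d. x = a @ v"
proof (induction rule: rtrancl_induct)
  case base
  have "[] \<in> vert d" by (simp add: vert_def)
  then show ?case by force
next
  case (step y z)
  then obtain v where v: "v \<in> vert d" "y = a @ v" by blast
  from step(2) have "(y, z) \<in> short_edges d \<or> (y, z) \<in> long_edges d k" by (auto simp: edges_def)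
  then have "\<exists>r. r \<in> vert d \<and> z = y @ r"
  proof
    assume "(y, z) \<in> short_edges d"
    then obtain a where "a \<in> {1..d}" "z = y @ [a]" by (auto simp: short_edges_def)
    then show ?thesis by (intro exI[of _ "[a]"]) (auto simp: vert_def)
  qed (auto simp: long_edges_def)
  then obtain r where r: "r \<in> vert d" "z = y @ r" by blast
  show ?case using v r by (intro bexI[of _ "v @ r"]) auto
qed

lemma S_prefix: "(a, x) \<in> {e \<in> short_edges d. \<omega> e}\<^sup>* \<Longrightarrow> \<exists>v\<in>vert d. x = a @ v"
proof -
  assume h: "(a, x) \<in> {e \<in> short_edges d. \<omega> e}\<^sup>*"
  have "{e \<in> short_edges d. \<omega> e}\<^sup>* \<subseteq> {e \<in> edges d k. \<omega> e}\<^sup>*"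
    by (rule rtrancl_mono) (auto simp: edges_def)
  then show ?thesis using h E_prefix by blast
qed

lemma S_sub_E: "{e \<in> short_edges d. \<omega> e}\<^sup>* \<subseteq> {e \<in> edges d k. \<omega> e}\<^sup>*"
  by (rule rtrancl_mono) (auto simp: edges_def)

lemma S_between: "(a, z) \<in> {e \<in> short_edges d. \<omega> e}\<^sup>* \<Longrightarrow> prefix a y \<Longrightarrow> prefix y z
  \<Longrightarrow> (a, y) \<in> {e \<in> short_edges d. \<omega> e}\<^sup>*"
proof (induction arbitrary: y rule: rtrancl_induct)
  case base
  then have "y = a" using prefix_order.antisym by blast
  then show ?case by simp
next
  case (step z z')
  from step(2) obtain b where b: "z' = z @ [b]" by (auto simp: short_edges_def)
  from step(5) b have "y = z @ [b] \<or> prefix y z" by simp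
  then show ?case
  proof
    assume "y = z @ [b]"
    then show ?thesis using step(1,2) b by (meson rtrancl_into_rtrancl)
  next
    assume "prefix y z"
    then show ?thesis using step(3,4) by blast
  qed
qed

lemma E_short: "(a, x) \<in> {e \<in> edges d k. \<omega> e}\<^sup>* \<Longrightarrow> length x < length a + k
  \<Longrightarrow> (a, x) \<in> {e \<in> short_edges d. \<omega> e}\<^sup>*"
proof (induction rule: rtrancl_induct)
  case base
  then show ?case by simp
next
  case (step y z)
  from E_prefix[OF step(1)] have ly: "length a \<le> length y" by auto
  from step(2) have "(y, z) \<in> short_edges d \<and> \<omega> (y, z) \<or> (\<exists>r. z = y @ r \<and> length r = k)"
    by (auto simp: edges_def long_edges_def)
  then show ?case
  proof
    assume sh: "(y, z) \<in> short_edges d \<and> \<omega> (y, z)"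
    then have "length z = Suc (length y)" by (auto simp: short_edges_def)
    then have "length y < length a + k" using step(4) by simp
    then have "(a, y) \<in> {e \<in> short_edges d. \<omega> e}\<^sup>*" by (rule step(3))
    moreover have "(y, z) \<in> {e \<in> short_edges d. \<omega> e}" using sh by simp
    ultimately show ?thesis by (rule rtrancl_into_rtrancl)
  next
    assume "\<exists>r. z = y @ r \<and> length r = k"
    then have "length z = length y + k" by auto
    then have False using step(4) ly by simp
    then show ?thesis ..
  qed
qed

lemma pi_sub_vert: "A \<subseteq> vert d \<Longrightarrow> pi_reach d \<omega> A \<subseteq> vert d"
  using S_prefix by (fastforce simp: pi_reach_def)

lemma pi_between: "z \<in> pi_reach d \<omega> A \<Longrightarrow> prefix y z \<Longrightarrow> y \<notin> pi_reach d \<omega> A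
  \<Longrightarrow> \<exists>a\<in>A. prefix y a \<and> a \<noteq> y"
proof -
  assume z: "z \<in> pi_reach d \<omega> A" and yz: "prefix y z" and ny: "y \<notin> pi_reach d \<omega> A"
  from z obtain a where a: "a \<in> A" "(a, z) \<in> {e \<in> short_edges d. \<omega> e}\<^sup>*"
    by (auto simp: pi_reach_def)
  from S_prefix[OF a(2)] have az: "prefix a z" by auto
  from prefix_same_cases[OF az yz] have "prefix a y \<or> prefix y a" .
  moreover have "\<not> prefix a y"
  proof
    assume "prefix a y"
    then have "(a, y) \<in> {e \<in> short_edges d. \<omega> e}\<^sup>*" using S_between a(2) yz by blast
    then show False using ny a(1) by (auto simp: pi_reach_def)
  qed
  moreover have "a \<in> pi_reach d \<omega> A" using a(1) by (auto simp: pi_reach_def)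
  ultimately show ?thesis using a(1) ny by blast
qed

definition meets :: "nat \<Rightarrow> (nat list \<times> nat list \<Rightarrow> bool) \<Rightarrow> nat list set \<Rightarrow> nat list \<Rightarrow> bool" where
  "meets d \<omega> A u \<longleftrightarrow> (\<exists>x\<in>pi_reach d \<omega> A. prefix u x)"

lemma meets_iff: "A \<subseteq> vert d \<Longrightarrow> prog d u \<inter> pi_reach d \<omega> A \<noteq> {} \<longleftrightarrow> meets d \<omega> A u"
  using prog_iff pi_sub_vert unfolding meets_def by blast

lemma hubs_iff: "A \<subseteq> vert d \<Longrightarrow> (u, v) \<in> hubs d \<omega> A \<longleftrightarrow>
   (u, v) \<in> short_edges d \<and> \<not> meets d \<omega> A v \<and> meets d \<omega> A u"
proof -
  assume a: "A \<subseteq> vert d"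
  have "(u, v) \<in> hubs d \<omega> A \<longleftrightarrow> (u, v) \<in> short_edges d \<and> \<not> (prog d v \<inter> pi_reach d \<omega> A \<noteq> {})
     \<and> prog d u \<inter> pi_reach d \<omega> A \<noteq> {}" by (simp add: hubs_def)
  then show ?thesis by (simp only: meets_iff[OF a])
qed

lemma meets_mono: "prefix p q \<Longrightarrow> meets d \<omega> A q \<Longrightarrow> meets d \<omega> A p"
  unfolding meets_def using prefix_order.trans by blast

lemma transition: "f 0 \<Longrightarrow> \<not> f n \<Longrightarrow> \<exists>i<n. f i \<and> \<not> f (Suc i)"
proof (induction n)
  case 0 then show ?case by simp
next
  case (Suc n)
  show ?case
  proof (cases "f n")
    case True then show ?thesis using Suc.prems by blast
  next
    case False
    then obtain i where "i < n" "f i" "\<not> f (Suc i)" using Suc.IH Suc.prems by blast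
    then show ?thesis using less_SucI by blast
  qed
qed

lemma take_prefix_mono: "m \<le> n \<Longrightarrow> prefix (take m xs) (take n xs)"
proof -
  assume "m \<le> n"
  then have "take n xs = take m xs @ take (n - m) (drop m xs)" using take_add[of m "n - m" xs] by simp
  then show ?thesis by (rule prefixI)
qed
theorem lemma5:
  fixes d k :: nat and \<omega> :: "nat list \<times> nat list \<Rightarrow> bool" and A :: "nat list set"
  assumes "d \<ge> 2" and "k \<ge> 1" and "A \<subseteq> vert d"
  shows "(\<forall>e\<in>hubs d \<omega> A. \<forall>e'\<in>hubs d \<omega> A. e \<noteq> e' \<longrightarrow> prog_edge d e \<inter> prog_edge d e' = {})
    \<and> ((\<exists>w\<in>vert d. A \<subseteq> {w @ v | v. v \<in> vert d \<and> length v \<le> k}) \<longrightarrow>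
        (\<forall>u r. (u, u @ r) \<in> long_edges d k \<and> length r = k \<and>
               u \<in> pi_reach d \<omega> A \<and> u @ r \<notin> pi_reach d \<omega> A \<longrightarrow>
               (\<exists>!e'. e' \<in> trace u r \<inter> hubs d \<omega> A))
      \<and> Pi_reach d k \<omega> A = pi_reach d \<omega> A \<union> (\<Union>e\<in>hubs d \<omega> A. Pi_reach d k \<omega> A \<inter> prog_edge d e)
      \<and> (\<forall>e\<in>hubs d \<omega> A. pi_reach d \<omega> A \<inter> (Pi_reach d k \<omega> A \<inter> prog_edge d e) = {}))"
proof -
  let ?P = "pi_reach d \<omega> A"
  let ?M = "meets d \<omega> A"
  have hub: "\<And>u v. (u, v) \<in> hubs d \<omega> A \<longleftrightarrow> (u, v) \<in> short_edges d \<and> \<not> ?M v \<and> ?M u"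
    using hubs_iff[OF assms(3)] .
  have hubE: "\<exists>u b. e = (u, u @ [b]) \<and> ?M u \<and> \<not> ?M (u @ [b])" if "e \<in> hubs d \<omega> A" for e
  proof -
    obtain u v where e: "e = (u, v)" by (cases e)
    then have "(u, v) \<in> short_edges d" "\<not> ?M v" "?M u" using that hub by auto
    then show ?thesis using e by (auto simp: short_edges_def)
  qed
  have part1: "\<forall>e\<in>hubs d \<omega> A. \<forall>e'\<in>hubs d \<omega> A. e \<noteq> e' \<longrightarrow> prog_edge d e \<inter> prog_edge d e' = {}"
  proof (intro ballI impI)
    fix e e' assume e: "e \<in> hubs d \<omega> A" and e': "e' \<in> hubs d \<omega> A" and ne: "e \<noteq> e'"
    obtain u b where eu: "e = (u, u @ [b])" and mu: "?M u" and nb: "\<not> ?M (u @ [b])"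
      using hubE[OF e] by blast
    obtain u' b' where eu': "e' = (u', u' @ [b'])" and mu': "?M u'" and nb': "\<not> ?M (u' @ [b'])"
      using hubE[OF e'] by blast
    show "prog_edge d e \<inter> prog_edge d e' = {}"
    proof (rule ccontr)
      assume "prog_edge d e \<inter> prog_edge d e' \<noteq> {}"
      then obtain x where "x \<in> prog d (u @ [b])" "x \<in> prog d (u' @ [b'])"
        by (auto simp: prog_edge_def eu eu')
      then have px: "prefix (u @ [b]) x" "prefix (u' @ [b']) x" using prog_prefix by blast+
      from prefix_same_cases[OF px] show False
      proof
        assume "prefix (u @ [b]) (u' @ [b'])"
        then have "u @ [b] = u' @ [b'] \<or> prefix (u @ [b]) u'" by simp
        then show False
        proof
          assume "u @ [b] = u' @ [b']" then show False using ne eu eu' by simp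
        next
          assume "prefix (u @ [b]) u'" then show False using meets_mono mu' nb by blast
        qed
      next
        assume "prefix (u' @ [b']) (u @ [b])"
        then have "u' @ [b'] = u @ [b] \<or> prefix (u' @ [b']) u" by simp
        then show False
        proof
          assume "u' @ [b'] = u @ [b]" then show False using ne eu eu' by simp
        next
          assume "prefix (u' @ [b']) u" then show False using meets_mono mu nb' by blast
        qed
      qed
    qed
  qed
  have hubI: "(p @ take i r, p @ take (Suc i) r) \<in> hubs d \<omega> A"
    if "p \<in> vert d" "r \<in> vert d" "i < length r" "?M (p @ take i r)" "\<not> ?M (p @ take (Suc i) r)"
    for p r i
  proof -
    have ts: "take (Suc i) r = take i r @ [r ! i]" using that(3) by (simp add: take_Suc_conv_app_nth)
    have "take i r \<in> vert d" using that(2) set_take_subset[of i r] by (auto simp: vert_def)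
    moreover have "r ! i \<in> {1..d}" proof -
      have "r ! i \<in> set r" using that(3) by simp
      then show ?thesis using that(2) by (auto simp: vert_def)
    qed
    ultimately have "(p @ take i r, p @ take i r @ [r ! i]) \<in> short_edges d"
      using that(1) short_edgeI[of "p @ take i r" d "r ! i"] by simp
    then show ?thesis using hub that(4,5) ts by simp
  qed
  have part2: "(\<exists>w\<in>vert d. A \<subseteq> {w @ v | v. v \<in> vert d \<and> length v \<le> k}) \<longrightarrow>
        (\<forall>u r. (u, u @ r) \<in> long_edges d k \<and> length r = k \<and>
               u \<in> pi_reach d \<omega> A \<and> u @ r \<notin> pi_reach d \<omega> A \<longrightarrow>
               (\<exists>!e'. e' \<in> trace u r \<inter> hubs d \<omega> A))
      \<and> Pi_reach d k \<omega> A = pi_reach d \<omega> A \<union> (\<Union>e\<in>hubs d \<omega> A. Pi_reach d k \<omega> A \<inter> prog_edge d e)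
      \<and> (\<forall>e\<in>hubs d \<omega> A. pi_reach d \<omega> A \<inter> (Pi_reach d k \<omega> A \<inter> prog_edge d e) = {})"
  proof
    assume "\<exists>w\<in>vert d. A \<subseteq> {w @ v | v. v \<in> vert d \<and> length v \<le> k}"
    then obtain w where Aw: "A \<subseteq> {w @ v | v. v \<in> vert d \<and> length v \<le> k}" by blast
    have Alen: "prefix w a \<and> length a \<le> length w + k" if aA: "a \<in> A" for a
    proof -
      obtain v where "a = w @ v" "length v \<le> k" using Aw aA by blast
      then show ?thesis by simp
    qed
    have ci: "\<forall>u r. (u, u @ r) \<in> long_edges d k \<and> length r = k \<and>
               u \<in> ?P \<and> u @ r \<notin> ?P \<longrightarrow> (\<exists>!e'. e' \<in> trace u r \<inter> hubs d \<omega> A)"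
    proof (intro allI impI)
      fix u r assume H: "(u, u @ r) \<in> long_edges d k \<and> length r = k \<and> u \<in> ?P \<and> u @ r \<notin> ?P"
      have uv: "u \<in> vert d" and rv: "r \<in> vert d" using H by (auto simp: long_edges_def)
      have nm: "\<not> ?M (u @ r)"
      proof
        assume "?M (u @ r)"
        then obtain z where z: "z \<in> ?P" "prefix (u @ r) z" by (auto simp: meets_def)
        from pi_between[OF z] H obtain a where a: "a \<in> A" "prefix (u @ r) a" "a \<noteq> u @ r" by blast
        then obtain t where "a = u @ r @ t" "t \<noteq> []" by (auto simp: prefix_def)
        then have la: "length a > length u + k" using H by simp
        from H obtain a' where a': "a' \<in> A" "(a', u) \<in> {e \<in> short_edges d. \<omega> e}\<^sup>*"
          by (auto simp: pi_reach_def)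
        from S_prefix[OF a'(2)] have "length a' \<le> length u" by auto
        moreover have "length w \<le> length a'" using Alen[OF a'(1)] prefix_length_le by blast
        moreover have "length a \<le> length w + k" using Alen[OF a(1)] by blast
        ultimately show False using la by linarith
      qed
      have m0: "?M u" using H by (auto simp: meets_def)
      define f where "f i = ?M (u @ take i r)" for i
      have "f 0" using m0 by (simp add: f_def)
      moreover have "\<not> f k" using nm H by (simp add: f_def)
      ultimately obtain i where i: "i < k" "f i" "\<not> f (Suc i)" using transition[of f k] by blast
      let ?e = "(u @ take i r, u @ take (Suc i) r)"
      have tr: "?e \<in> trace u r" unfolding trace_def using i H by auto
      have hb: "?e \<in> hubs d \<omega> A" using hubI[OF uv rv] i H by (simp add: f_def)
      show "\<exists>!e'. e' \<in> trace u r \<inter> hubs d \<omega> A"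
      proof (rule ex1I[of _ ?e])
        show "?e \<in> trace u r \<inter> hubs d \<omega> A" using tr hb by blast
      next
        fix e' assume e': "e' \<in> trace u r \<inter> hubs d \<omega> A"
        then obtain j where j: "j < length r" "e' = (u @ take j r, u @ take (Suc j) r)"
          by (auto simp: trace_def)
        have fj: "f j" "\<not> f (Suc j)" using e' j hub by (auto simp: f_def)
        show "e' = ?e"
        proof (cases rule: linorder_cases[of i j])
          case less
          then have "prefix (u @ take (Suc i) r) (u @ take j r)" using take_prefix_mono[of "Suc i" j r] less by simp
          then have False using fj i meets_mono unfolding f_def by blast
          then show ?thesis ..
        next
          case equal then show ?thesis using j by simp
        next
          case greater
          then have "prefix (u @ take (Suc j) r) (u @ take i r)" using take_prefix_mono[of "Suc j" i r] greater by simp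
          then have False using fj i meets_mono unfolding f_def by blast
          then show ?thesis ..
        qed
      qed
    qed
    have cii: "Pi_reach d k \<omega> A = ?P \<union> (\<Union>e\<in>hubs d \<omega> A. Pi_reach d k \<omega> A \<inter> prog_edge d e)"
    proof
      show "Pi_reach d k \<omega> A \<subseteq> ?P \<union> (\<Union>e\<in>hubs d \<omega> A. Pi_reach d k \<omega> A \<inter> prog_edge d e)"
      proof
        fix x assume x: "x \<in> Pi_reach d k \<omega> A"
        show "x \<in> ?P \<union> (\<Union>e\<in>hubs d \<omega> A. Pi_reach d k \<omega> A \<inter> prog_edge d e)"
        proof (cases "x \<in> ?P")
          case True then show ?thesis by simp
        next
          case False
          obtain a where a: "a \<in> A" "(a, x) \<in> {e \<in> edges d k. \<omega> e}\<^sup>*"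
            using x by (auto simp: Pi_reach_def)
          obtain t where t: "t \<in> vert d" "x = a @ t" using E_prefix[OF a(2)] by blast
          have av: "a \<in> vert d" using assms(3) a by blast
          have nmx: "\<not> ?M x"
          proof
            assume "?M x"
            then obtain z where z: "z \<in> ?P" "prefix x z" by (auto simp: meets_def)
            from pi_between[OF z False] obtain a' where a': "a' \<in> A" "prefix x a'" "a' \<noteq> x" by blast
            then obtain s where "a' = x @ s" "s \<noteq> []" by (auto simp: prefix_def)
            then have "length x < length a'" by simp
            moreover have "length a' \<le> length w + k" using Alen[OF a'(1)] by blast
            moreover have "length w \<le> length a" using Alen[OF a(1)] prefix_length_le by blast
            ultimately have "length x < length a + k" by linarith
            from E_short[OF a(2) this] have "x \<in> ?P" using a(1) by (auto simp: pi_reach_def)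
            then show False using False by blast
          qed
          have ma: "?M a" using a(1) by (auto simp: meets_def pi_reach_def)
          define f where "f i = ?M (a @ take i t)" for i
          have "f 0" using ma by (simp add: f_def)
          moreover have "\<not> f (length t)" using nmx t by (simp add: f_def)
          ultimately obtain i where i: "i < length t" "f i" "\<not> f (Suc i)"
            using transition[of f "length t"] by blast
          let ?e = "(a @ take i t, a @ take (Suc i) t)"
          have hb: "?e \<in> hubs d \<omega> A" using hubI[OF av t(1)] i by (simp add: f_def)
          have "drop (Suc i) t \<in> vert d" using t(1) set_drop_subset[of "Suc i" t] by (auto simp: vert_def)
          then have "(a @ take (Suc i) t) @ drop (Suc i) t \<in> prog d (a @ take (Suc i) t)" by (rule progI)
          then have "x \<in> prog_edge d ?e" using t(2) by (simp add: prog_edge_def)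
          then show ?thesis using hb x by blast
        qed
      qed
      show "?P \<union> (\<Union>e\<in>hubs d \<omega> A. Pi_reach d k \<omega> A \<inter> prog_edge d e) \<subseteq> Pi_reach d k \<omega> A"
        using S_sub_E[of d \<omega> k] by (auto simp: pi_reach_def Pi_reach_def)
    qed
    have ciii: "\<forall>e\<in>hubs d \<omega> A. ?P \<inter> (Pi_reach d k \<omega> A \<inter> prog_edge d e) = {}"
      by (auto simp: hubs_def prog_edge_def)
    show "(\<forall>u r. (u, u @ r) \<in> long_edges d k \<and> length r = k \<and>
               u \<in> pi_reach d \<omega> A \<and> u @ r \<notin> pi_reach d \<omega> A \<longrightarrow>
               (\<exists>!e'. e' \<in> trace u r \<inter> hubs d \<omega> A))
      \<and> Pi_reach d k \<omega> A = pi_reach d \<omega> A \<union> (\<Union>e\<in>hubs d \<omega> A. Pi_reach d k \<omega> A \<inter> prog_edge d e)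
      \<and> (\<forall>e\<in>hubs d \<omega> A. pi_reach d \<omega> A \<inter> (Pi_reach d k \<omega> A \<inter> prog_edge d e) = {})"
      by (rule conjI[OF ci conjI[OF cii ciii]])
  qed
  show ?thesis by (rule conjI[OF part1 part2])
qed
end
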